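(* Let $u$ be a stationary point with associated $g$, and suppose $\omega_c$ contains an interval $I$ of positive length. Then the function $x\mapsto\int_x^{x+1}g(s)\,ds$ is constant on the interior of $I$.
   Context: Fix $T>1$ and $a,b\in C^1(\mathbb{R})$, globally Lipschitz, with $a\ge a_0>0$. $U=\{1+v:v\in H^1_0(0,T)\}$, $(Bu)(x)=\int_x^{x+1}u$ for $x\in[0,T-1]$, $\omega_c=\{x\in[0,T-1]:(Bu)(x)=0\}$. A stationary point is a $u\in U\cap W^{2,\infty}(0,T)$ with $Bu\ge0$ on $[0,T-1]$ for which there is a nonnegative Radon measure $f$ on $[0,T-1]$ (extended by zero outside), with $\operatorname{supp}f\subset\omega_c$, such that $-2a(u)u''-a'(u)(u')^2+b'(u)=g$ a.e. on $(0,T)$, where $g(x)=\int_{x-1}^xf:=f([x-1,x])$. *)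

theory Defs
  imports "HOL-Analysis.Analysis"
begin

definition Bop :: "(real \<Rightarrow> real) \<Rightarrow> real \<Rightarrow> real" where
  "Bop u x = integral {x..x+1} u"

definition omega_c :: "real \<Rightarrow> (real \<Rightarrow> real) \<Rightarrow> real set" where
  "omega_c T u = {x \<in> {0..T-1}. Bop u x = 0}"

definition measure_support :: "real measure \<Rightarrow> real set" where
  "measure_support M = {x. \<forall>e>0. emeasure M (ball x e) > 0}"

definition g_of :: "real measure \<Rightarrow> real \<Rightarrow> real" where
  "g_of f x = measure f {x-1..x}"

text \<open>u in W^{2,infinity}(0,T), written via its (continuous) representative:
  u' = u1 absolutely continuous with bounded measurable derivative u2.\<close>
definition W2inf :: "real \<Rightarrow> (real \<Rightarrow> real) \<Rightarrow> (real \<Rightarrow> real) \<Rightarrow> (real \<Rightarrow> real) \<Rightarrow> bool" where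
  "W2inf T u u1 u2 \<longleftrightarrow>
     u2 \<in> borel_measurable lborel \<and> (\<exists>M. \<forall>x\<in>{0..T}. \<bar>u2 x\<bar> \<le> M) \<and>
     (\<forall>x\<in>{0..T}. u1 x = u1 0 + integral {0..x} u2) \<and>
     (\<forall>x\<in>{0..T}. u x = u 0 + integral {0..x} u1)"

definition stationary_point ::
  "real \<Rightarrow> (real \<Rightarrow> real) \<Rightarrow> (real \<Rightarrow> real) \<Rightarrow> (real \<Rightarrow> real) \<Rightarrow> (real \<Rightarrow> real)
   \<Rightarrow> real measure \<Rightarrow> bool" where
  "stationary_point T a a' b' u f \<longleftrightarrow>
     u 0 = 1 \<and> u T = 1 \<and>
     (\<forall>x\<in>{0..T-1}. Bop u x \<ge> 0) \<and>
     sets f = sets borel \<and> finite_measure f \<and>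
     emeasure f (- {0..T-1}) = 0 \<and>
     measure_support f \<subseteq> omega_c T u \<and>
     (\<exists>u1 u2. W2inf T u u1 u2 \<and>
        (AE x in lborel. x \<in> {0<..<T} \<longrightarrow>
           - 2 * a (u x) * u2 x - a' (u x) * (u1 x)^2 + b' (u x) = g_of f x))"

end

theory Submission imports Defs "HOL-Probability.Distribution_Functions" begin

lemma ae_zero_core:
  fixes \<psi> :: "real \<Rightarrow> real" and x y :: real
  assumes meas: "\<psi> \<in> borel_measurable borel"
    and ai: "\<psi> absolutely_integrable_on {x..y}"
    and z: "\<And>t s. x \<le> t \<Longrightarrow> t \<le> s \<Longrightarrow> s \<le> y \<Longrightarrow> integral {t..s} \<psi> = 0"
  shows "AE s in lborel. s \<in> {x..y} \<longrightarrow> \<psi> s = 0"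
proof -
  define P where "P s = (\<psi> s + \<bar>\<psi> s\<bar>) / 2" for s
  define N where "N s = (\<bar>\<psi> s\<bar> - \<psi> s) / 2" for s
  have Pnn: "P s \<ge> 0" "N s \<ge> 0" for s unfolding P_def N_def by auto
  have i1: "\<psi> integrable_on {x..y}" "(\<lambda>s. \<bar>\<psi> s\<bar>) integrable_on {x..y}"
    using ai absolutely_integrable_on_def[of _ \<psi>] by (auto simp: real_norm_def)
  have iP: "P integrable_on {x..y}" "N integrable_on {x..y}"
    unfolding P_def N_def using i1 by (auto intro!: integrable_divide integrable_add integrable_diff)
  have iPs: "P integrable_on {x..m}" "N integrable_on {x..m}" if "m \<le> y" for m
    using iP integrable_on_subinterval[of _ "{x..y}" x m] that by auto
  have eqPN: "integral {x..m} P = integral {x..m} N" if "m \<le> y" for m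
  proof (cases "x \<le> m")
    case True
    have "integral {x..m} P - integral {x..m} N = integral {x..m} (\<lambda>s. P s - N s)"
      using iPs[OF that] by (simp add: integral_diff)
    also have "\<dots> = integral {x..m} \<psi>" unfolding P_def N_def by (simp add: field_simps)
    also have "\<dots> = 0" using z[of x m] True that by auto
    finally show ?thesis by simp
  next
    case False then show ?thesis by simp
  qed
  define M1 where "M1 = density lborel (\<lambda>s. ennreal (P s) * indicator {x..y} s)"
  define M2 where "M2 = density lborel (\<lambda>s. ennreal (N s) * indicator {x..y} s)"
  have mP[measurable]: "P \<in> borel_measurable borel" "N \<in> borel_measurable borel"
    unfolding P_def N_def using meas by auto
  have em1: "emeasure M1 A = ennreal (integral {x..min y m} P)" if "A = {..m} \<inter> {x..y}" for A m
  proof -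
    have "emeasure M1 A = (\<integral>\<^sup>+ s. (ennreal (P s) * indicator {x..y} s) * indicator A s \<partial>lborel)"
      unfolding M1_def using that by (subst emeasure_density) auto
    also have "\<dots> = (\<integral>\<^sup>+ s. ennreal (P s) * indicator {x..min y m} s \<partial>lborel)"
      using that by (intro nn_integral_cong) (auto simp: indicator_def)
    also have "\<dots> = ennreal (integral {x..min y m} P)"
      by (rule nn_integral_has_integral_lebesgue') (use Pnn iPs[of "min y m"] in auto)
    finally show ?thesis .
  qed
  have em2: "emeasure M2 A = ennreal (integral {x..min y m} N)" if "A = {..m} \<inter> {x..y}" for A m
  proof -
    have "emeasure M2 A = (\<integral>\<^sup>+ s. (ennreal (N s) * indicator {x..y} s) * indicator A s \<partial>lborel)"
      unfolding M2_def using that by (subst emeasure_density) auto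
    also have "\<dots> = (\<integral>\<^sup>+ s. ennreal (N s) * indicator {x..min y m} s \<partial>lborel)"
      using that by (intro nn_integral_cong) (auto simp: indicator_def)
    also have "\<dots> = ennreal (integral {x..min y m} N)"
      by (rule nn_integral_has_integral_lebesgue') (use Pnn iPs[of "min y m"] in auto)
    finally show ?thesis .
  qed
  have sp: "space M1 = UNIV" "space M2 = UNIV" unfolding M1_def M2_def by auto
  have em1': "emeasure M1 {..m} = ennreal (integral {x..min y m} P)" for m
  proof -
    have "emeasure M1 {..m} = (\<integral>\<^sup>+ s. (ennreal (P s) * indicator {x..y} s) * indicator {..m} s \<partial>lborel)"
      unfolding M1_def by (subst emeasure_density) auto
    also have "\<dots> = emeasure M1 ({..m} \<inter> {x..y})"
      unfolding M1_def by (subst emeasure_density) (auto intro!: nn_integral_cong simp: indicator_def)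
    finally show ?thesis using em1 by simp
  qed
  have em2': "emeasure M2 {..m} = ennreal (integral {x..min y m} N)" for m
  proof -
    have "emeasure M2 {..m} = (\<integral>\<^sup>+ s. (ennreal (N s) * indicator {x..y} s) * indicator {..m} s \<partial>lborel)"
      unfolding M2_def by (subst emeasure_density) auto
    also have "\<dots> = emeasure M2 ({..m} \<inter> {x..y})"
      unfolding M2_def by (subst emeasure_density) (auto intro!: nn_integral_cong simp: indicator_def)
    finally show ?thesis using em2 by simp
  qed
  have fin1: "emeasure M1 UNIV \<noteq> \<infinity>"
  proof -
    have "emeasure M1 UNIV = emeasure M1 ({..y} \<inter> {x..y})"
      unfolding M1_def by (subst (1 2) emeasure_density) (auto intro!: nn_integral_cong simp: indicator_def)
    then show ?thesis using em1[of _ y] by simp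
  qed
  have fin2: "emeasure M2 UNIV \<noteq> \<infinity>"
  proof -
    have "emeasure M2 UNIV = emeasure M2 ({..y} \<inter> {x..y})"
      unfolding M2_def by (subst (1 2) emeasure_density) (auto intro!: nn_integral_cong simp: indicator_def)
    then show ?thesis using em2[of _ y] by simp
  qed
  have fb1: "finite_borel_measure M1"
    unfolding finite_borel_measure_def finite_borel_measure_axioms_def
    using fin1 sp by (auto intro!: finite_measureI simp: M1_def)
  have fb2: "finite_borel_measure M2"
    unfolding finite_borel_measure_def finite_borel_measure_axioms_def
    using fin2 sp by (auto intro!: finite_measureI simp: M2_def)
  have "cdf M1 = cdf M2"
    unfolding cdf_def measure_def using em1' em2' eqPN by (auto intro!: ext)
  then have "M1 = M2" using cdf_unique'[OF fb1 fb2] by simp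
  then have "AE s in lborel. ennreal (P s) * indicator {x..y} s = ennreal (N s) * indicator {x..y} s"
    unfolding M1_def M2_def by (subst (asm) sigma_finite_measure.density_unique_iff[OF sigma_finite_lborel]) auto
  then show ?thesis
  proof (rule eventually_mono)
    fix s assume "ennreal (P s) * indicator {x..y} s = ennreal (N s) * indicator {x..y} s"
    then show "s \<in> {x..y} \<longrightarrow> \<psi> s = 0" using Pnn[of s]
      by (auto simp: P_def N_def indicator_def)
  qed
qed

lemma AE_lborel_negligible:
  assumes "AE x in lborel. P x"
  obtains N where "negligible N" "\<And>x. x \<notin> N \<Longrightarrow> P x"
proof -
  from assms obtain N where N: "{x \<in> space lborel. \<not> P x} \<subseteq> N" "emeasure lborel N = 0" "N \<in> sets lborel"
    by (rule AE_E)
  then have "N \<in> null_sets lborel" by auto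
  then have "negligible N" using negligible_iff_null_sets null_sets_completionI by blast
  then show ?thesis using that N(1) by auto
qed

lemma bdd_abs_int:
  fixes f :: "real \<Rightarrow> real"
  assumes "f \<in> borel_measurable lborel" "\<And>x. x \<in> {a..b} \<Longrightarrow> \<bar>f x\<bar> \<le> M"
  shows "f absolutely_integrable_on {a..b}"
proof (rule measurable_bounded_by_integrable_imp_absolutely_integrable[of f "{a..b}" "\<lambda>_. M"])
  show "f \<in> borel_measurable (lebesgue_on {a..b})"
    using assms(1) by (simp add: measurable_completion measurable_restrict_space1)
qed (use assms in auto)

lemma cont_zero_core:
  fixes \<psi> :: "real \<Rightarrow> real"
  assumes "continuous_on {x..y} \<psi>" "x < y"
    and z: "\<And>t s. x \<le> t \<Longrightarrow> t \<le> s \<Longrightarrow> s \<le> y \<Longrightarrow> integral {t..s} \<psi> = 0"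
    and r: "r \<in> {x..y}"
  shows "\<psi> r = 0"
proof -
  have d: "((\<lambda>u. integral {x..u} \<psi>) has_vector_derivative \<psi> r) (at r within {x..y})"
    using integral_has_vector_derivative[OF assms(1) r] .
  have "((\<lambda>u. 0) has_vector_derivative \<psi> r) (at r within {x..y})"
    by (rule has_vector_derivative_transform[OF r _ d]) (use z in auto)
  moreover have "((\<lambda>u. 0::real) has_vector_derivative 0) (at r within {x..y})" by simp
  ultimately show ?thesis
    using vector_derivative_unique_within_closed_interval[of x y r "\<lambda>u. 0" "\<psi> r" 0] assms(2) r by auto
qed

lemma g_integrable:
  assumes fin: "finite_measure f" and fs: "sets f = sets borel"
  shows "g_of f integrable_on {a..b}"
proof -
  interpret finite_measure f by fact
  have eq: "g_of f s = measure f {..s} - measure f {..<s-1}" for s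
  proof -
    have e: "{s-1..s} = {..s} - {..<s-1}" by auto
    have "{..<s-1} \<subseteq> {..s}" by auto
    then have "measure f ({..s} - {..<s-1}) = measure f {..s} - measure f {..<s-1}"
      using fs by (intro finite_measure_Diff) auto
    then show ?thesis unfolding g_of_def e .
  qed
  have m1: "mono_on {a..b} (\<lambda>s. measure f {..s})"
  proof (rule mono_onI)
    fix r s :: real assume "r \<le> s"
    then show "measure f {..r} \<le> measure f {..s}"
      using fs by (intro finite_measure_mono) auto
  qed
  have m2: "mono_on {a..b} (\<lambda>s. measure f {..<s-1})"
  proof (rule mono_onI)
    fix r s :: real assume "r \<le> s"
    then show "measure f {..<r-1} \<le> measure f {..<s-1}"
      using fs by (intro finite_measure_mono) auto
  qed
  have "(\<lambda>s. measure f {..s} - measure f {..<s-1}) integrable_on {a..b}"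
    by (intro integrable_diff integrable_on_mono_on m1 m2)
  then show ?thesis unfolding eq[abs_def] by simp
qed

theorem mainTheorem8:
  fixes T a0 :: real and a a' b b' u :: "real \<Rightarrow> real" and f :: "real measure"
    and I :: "real set"
  assumes "T > 1"
    and "\<And>x. (a has_real_derivative a' x) (at x)" and "continuous_on UNIV a'"
    and "\<And>x. (b has_real_derivative b' x) (at x)" and "continuous_on UNIV b'"
    and "\<exists>L. L-lipschitz_on UNIV a" and "\<exists>L. L-lipschitz_on UNIV b"
    and "a0 > 0" and "\<And>x. a x \<ge> a0"
    and "stationary_point T a a' b' u f"
    and "is_interval I" and "\<exists>c\<in>I. \<exists>d\<in>I. c < d" and "I \<subseteq> omega_c T u"
  shows "\<exists>C. \<forall>x\<in>interior I. integral {x..x+1} (g_of f) = C"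
proof -
  note sp = assms(10)[unfolded stationary_point_def]
  have fsets: "sets f = sets borel" using sp by (elim conjE) assumption
  have ffin: "finite_measure f" using sp by (elim conjE) assumption
  have "\<exists>u1 u2. W2inf T u u1 u2 \<and> (AE x in lborel. x \<in> {0<..<T} \<longrightarrow>
           - 2 * a (u x) * u2 x - a' (u x) * (u1 x)^2 + b' (u x) = g_of f x)"
    using sp by (elim conjE) assumption
  then obtain u1 u2 where W: "W2inf T u u1 u2"
    and ode: "AE x in lborel. x \<in> {0<..<T} \<longrightarrow>
           - 2 * a (u x) * u2 x - a' (u x) * (u1 x)^2 + b' (u x) = g_of f x"
    by (elim exE conjE)
  define F where "F x = - 2 * a (u x) * u2 x - a' (u x) * (u1 x)^2 + b' (u x)" for x
  have Wd: "u2 \<in> borel_measurable lborel \<and> (\<exists>M. \<forall>x\<in>{0..T}. \<bar>u2 x\<bar> \<le> M) \<and>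
     (\<forall>x\<in>{0..T}. u1 x = u1 0 + integral {0..x} u2) \<and>
     (\<forall>x\<in>{0..T}. u x = u 0 + integral {0..x} u1)" using W unfolding W2inf_def .
  have u2m: "u2 \<in> borel_measurable lborel" using Wd by (elim conjE) assumption
  have u1e0: "\<forall>x\<in>{0..T}. u1 x = u1 0 + integral {0..x} u2" using Wd by (elim conjE) assumption
  have ue0: "\<forall>x\<in>{0..T}. u x = u 0 + integral {0..x} u1" using Wd by (elim conjE) assumption
  have Mex: "\<exists>M. \<forall>x\<in>{0..T}. \<bar>u2 x\<bar> \<le> M" using Wd by (elim conjE) assumption
  have u1e: "\<And>x. x \<in> {0..T} \<Longrightarrow> u1 x = u1 0 + integral {0..x} u2" using u1e0 by (rule bspec)
  have ue: "\<And>x. x \<in> {0..T} \<Longrightarrow> u x = u 0 + integral {0..x} u1" using ue0 by (rule bspec)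
  obtain M where Mb: "\<And>x. x \<in> {0..T} \<Longrightarrow> \<bar>u2 x\<bar> \<le> M" using Mex by (elim exE) (rule that, rule bspec)
  have u2i: "u2 integrable_on {0..T}"
    using bdd_abs_int[OF u2m Mb] absolutely_integrable_on_def by blast
  have u1c: "continuous_on {0..T} u1"
  proof -
    have "continuous_on {0..T} (\<lambda>x. u1 0 + integral {0..x} u2)"
      by (intro continuous_intros indefinite_integral_continuous_1 u2i)
    then show ?thesis by (rule continuous_on_eq) (rule sym[OF u1e])
  qed
  have u1i: "u1 integrable_on {0..T}" by (rule integrable_continuous_interval[OF u1c])
  have uc: "continuous_on {0..T} u"
  proof -
    have "continuous_on {0..T} (\<lambda>x. u 0 + integral {0..x} u1)"
      by (intro continuous_intros indefinite_integral_continuous_1 u1i)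
    then show ?thesis by (rule continuous_on_eq) (rule sym[OF ue])
  qed
  have ui: "u integrable_on {0..T}" by (rule integrable_continuous_interval[OF uc])
  have du1: "integral {t..s} u2 = u1 s - u1 t" if "0 \<le> t" "t \<le> s" "s \<le> T" for t s
  proof -
    have "integral {0..t} u2 + integral {t..s} u2 = integral {0..s} u2"
      by (rule Henstock_Kurzweil_Integration.integral_combine) (use that integrable_on_subinterval[OF u2i, of 0 s] in auto)
    moreover have "s \<in> {0..T}" "t \<in> {0..T}" using that by auto
    ultimately show ?thesis using u1e[of s] u1e[of t] by linarith
  qed
  have du: "integral {t..s} u1 = u s - u t" if "0 \<le> t" "t \<le> s" "s \<le> T" for t s
  proof -
    have "integral {0..t} u1 + integral {t..s} u1 = integral {0..s} u1"
      by (rule Henstock_Kurzweil_Integration.integral_combine) (use that integrable_on_subinterval[OF u1i, of 0 s] in auto)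
    moreover have "s \<in> {0..T}" "t \<in> {0..T}" using that by auto
    ultimately show ?thesis using ue[of s] ue[of t] by linarith
  qed
  have Isub: "I \<subseteq> {0..T-1}" using assms(13) unfolding omega_c_def by auto
  have int_sub: "interior I \<subseteq> {0<..<T-1}"
    using interior_mono[OF Isub] by simp
  have key: "integral {x..x+1} (g_of f) = integral {y..y+1} (g_of f)"
    if xI: "x \<in> interior I" and yI: "y \<in> interior I" and xy: "x < y" for x y
  proof -
    have x0: "0 < x" and yT: "y < T - 1" using xI yI int_sub by auto
    have xI': "x \<in> I" using xI interior_subset by blast
    have yI': "y \<in> I" using yI interior_subset by blast
    have iv: "\<forall>a\<in>I. \<forall>b\<in>I. \<forall>z. a \<le> z \<and> z \<le> b \<longrightarrow> z \<in> I"
      using assms(11) unfolding is_interval_1 .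
    have sub: "{x..y} \<subseteq> I"
    proof
      fix r assume "r \<in> {x..y}"
      then have "x \<le> r \<and> r \<le> y" by simp
      then show "r \<in> I" using iv xI' yI' by blast
    qed
    have B0: "Bop u t = 0" if "t \<in> {x..y}" for t
      using sub that assms(13) unfolding omega_c_def by auto
    have uA: "u (r+1) = u r" if r: "r \<in> {x..y}" for r
    proof -
      have "(\<lambda>r. u (r+1) - u r) r = 0"
      proof (rule cont_zero_core[OF _ xy _ r])
        have c1: "continuous_on {x..y} (\<lambda>r. u (r+1))"
          by (rule continuous_on_compose2[OF uc]) (use x0 yT in \<open>auto intro!: continuous_intros\<close>)
        have c2: "continuous_on {x..y} u"
          by (rule continuous_on_subset[OF uc]) (use x0 yT in auto)
        show "continuous_on {x..y} (\<lambda>r. u (r+1) - u r)" by (intro continuous_on_diff c1 c2)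
        fix t s assume ts: "x \<le> t" "t \<le> s" "s \<le> y"
        have "integral {t..s} (\<lambda>r. u (r+1) - u r) = integral {t..s} (\<lambda>r. u (r+1)) - integral {t..s} u"
          by (rule integral_diff)
            (use ts c1 c2 in \<open>auto intro!: integrable_continuous_interval elim: continuous_on_subset\<close>)
        also have "integral {t..s} (\<lambda>r. u (r+1)) = integral {t+1..s+1} u"
          using integral_shift_real_ivl[of "t+1" 1 "s+1" u] by simp
        also have "integral {t..s} u + integral {s..s+1} u = integral {t..s+1} u"
          by (rule Henstock_Kurzweil_Integration.integral_combine) (use ts x0 yT integrable_on_subinterval[OF ui, of t "s+1"] in auto)
        moreover have "integral {t..t+1} u + integral {t+1..s+1} u = integral {t..s+1} u"
          by (rule Henstock_Kurzweil_Integration.integral_combine) (use ts x0 yT integrable_on_subinterval[OF ui, of t "s+1"] in auto)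
        moreover have "integral {s..s+1} u = 0" "integral {t..t+1} u = 0"
          using B0[of s] B0[of t] ts unfolding Bop_def by auto
        ultimately show "integral {t..s} (\<lambda>r. u (r+1) - u r) = 0" by linarith
      qed
      then show ?thesis by simp
    qed
    have u1A: "u1 (r+1) = u1 r" if r: "r \<in> {x..y}" for r
    proof -
      have "(\<lambda>r. u1 (r+1) - u1 r) r = 0"
      proof (rule cont_zero_core[OF _ xy _ r])
        have c1: "continuous_on {x..y} (\<lambda>r. u1 (r+1))"
          by (rule continuous_on_compose2[OF u1c]) (use x0 yT in \<open>auto intro!: continuous_intros\<close>)
        have c2: "continuous_on {x..y} u1"
          by (rule continuous_on_subset[OF u1c]) (use x0 yT in auto)
        show "continuous_on {x..y} (\<lambda>r. u1 (r+1) - u1 r)" by (intro continuous_on_diff c1 c2)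
        fix t s assume ts: "x \<le> t" "t \<le> s" "s \<le> y"
        have "integral {t..s} (\<lambda>r. u1 (r+1) - u1 r) = integral {t..s} (\<lambda>r. u1 (r+1)) - integral {t..s} u1"
          by (rule integral_diff)
            (use ts c1 c2 in \<open>auto intro!: integrable_continuous_interval elim: continuous_on_subset\<close>)
        also have "integral {t..s} (\<lambda>r. u1 (r+1)) = integral {t+1..s+1} u1"
          using integral_shift_real_ivl[of "t+1" 1 "s+1" u1] by simp
        also have "integral {t+1..s+1} u1 = u (s+1) - u (t+1)" using du[of "t+1" "s+1"] ts x0 yT by auto
        also have "integral {t..s} u1 = u s - u t" using du[of t s] ts x0 yT by auto
        finally show "integral {t..s} (\<lambda>r. u1 (r+1) - u1 r) = 0"
          using uA[of s] uA[of t] ts by auto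
      qed
      then show ?thesis by simp
    qed
    have aeu2: "AE r in lborel. r \<in> {x..y} \<longrightarrow> u2 (r+1) - u2 r = 0"
    proof (rule ae_zero_core)
      show "(\<lambda>r. u2 (r+1) - u2 r) \<in> borel_measurable borel" using u2m by simp
      show "(\<lambda>r. u2 (r+1) - u2 r) absolutely_integrable_on {x..y}"
      proof (rule bdd_abs_int[where M="2*M"])
        show "(\<lambda>r. u2 (r+1) - u2 r) \<in> borel_measurable lborel" using u2m by simp
        fix r assume r: "r \<in> {x..y}"
        then have "\<bar>u2 (r+1)\<bar> \<le> M" "\<bar>u2 r\<bar> \<le> M" using Mb x0 yT by auto
        then show "\<bar>u2 (r+1) - u2 r\<bar> \<le> 2*M" by linarith
      qed
      fix t s assume ts: "x \<le> t" "t \<le> s" "s \<le> y"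
      have i1: "u2 integrable_on {t+1..s+1}"
        using integrable_on_subinterval[OF u2i, of "t+1" "s+1"] ts x0 yT by auto
      have i2: "u2 integrable_on {t..s}"
        using integrable_on_subinterval[OF u2i, of t s] ts x0 yT by auto
      have i3: "(\<lambda>r. u2 (r+1)) integrable_on {t..s}"
        using integrable_shift_real_ivl[OF i1, of 1] by simp
      have "integral {t..s} (\<lambda>r. u2 (r+1) - u2 r) = integral {t..s} (\<lambda>r. u2 (r+1)) - integral {t..s} u2"
        by (rule integral_diff[OF i3 i2])
      also have "integral {t..s} (\<lambda>r. u2 (r+1)) = integral {t+1..s+1} u2"
        using integral_shift_real_ivl[of "t+1" 1 "s+1" u2] by simp
      also have "integral {t+1..s+1} u2 = u1 (s+1) - u1 (t+1)" using du1[of "t+1" "s+1"] ts x0 yT by auto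
      also have "integral {t..s} u2 = u1 s - u1 t" using du1[of t s] ts x0 yT by auto
      finally show "integral {t..s} (\<lambda>r. u2 (r+1) - u2 r) = 0"
        using u1A[of s] u1A[of t] ts by auto
    qed
    obtain N1 where N1: "negligible N1" "\<And>r. r \<notin> N1 \<Longrightarrow> r \<in> {x..y} \<longrightarrow> u2 (r+1) - u2 r = 0"
      using AE_lborel_negligible[OF aeu2] by blast
    obtain N0 where N0: "negligible N0" "\<And>r. r \<notin> N0 \<Longrightarrow> r \<in> {0<..<T} \<longrightarrow> F r = g_of f r"
      using AE_lborel_negligible[OF ode] unfolding F_def by blast
    define N where "N = N1 \<union> N0 \<union> ((+) (-1)) ` N0"
    have Nn: "negligible N" unfolding N_def
      by (intro negligible_Un N1 N0 negligible_translation)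
    have gper: "g_of f (r+1) = g_of f r" if r: "r \<in> {x..y} - N" for r
    proof -
      have rN: "r \<notin> N1" "r \<notin> N0" using r unfolding N_def by auto
      have rN2: "r + 1 \<notin> N0"
      proof
        assume "r + 1 \<in> N0"
        then have "(-1) + (r+1) \<in> (+) (-1) ` N0" by blast
        then show False using r unfolding N_def by simp
      qed
      have rr: "r \<in> {x..y}" using r by auto
      have "g_of f (r+1) = F (r+1)" using N0(2)[OF rN2] rr x0 yT by auto
      also have "\<dots> = F r" unfolding F_def
        using uA[OF rr] u1A[OF rr] N1(2)[OF rN(1)] rr by simp
      also have "\<dots> = g_of f r" using N0(2)[OF rN(2)] rr x0 yT by auto
      finally show ?thesis .
    qed
    have gi: "g_of f integrable_on {x..y+1}" by (rule g_integrable[OF ffin fsets])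
    have "integral {x..x+1} (g_of f) + integral {x+1..y+1} (g_of f) = integral {x..y+1} (g_of f)"
      by (rule Henstock_Kurzweil_Integration.integral_combine) (use xy gi in auto)
    moreover have "integral {x..y} (g_of f) + integral {y..y+1} (g_of f) = integral {x..y+1} (g_of f)"
      by (rule Henstock_Kurzweil_Integration.integral_combine) (use xy gi in auto)
    moreover have "integral {x+1..y+1} (g_of f) = integral {x..y} (\<lambda>r. g_of f (r+1))"
      using integral_shift_real_ivl[of "x+1" 1 "y+1" "g_of f"] by simp
    moreover have "integral {x..y} (\<lambda>r. g_of f (r+1)) = integral {x..y} (g_of f)"
      by (rule integral_spike[OF Nn]) (use gper in auto)
    ultimately show ?thesis by linarith
  qed
  show ?thesis
  proof (cases "interior I = {}")
    case True then show ?thesis by auto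
  next
    case False
    then obtain x0 where x0: "x0 \<in> interior I" by auto
    show ?thesis
    proof (intro exI ballI)
      fix x assume x: "x \<in> interior I"
      show "integral {x..x+1} (g_of f) = integral {x0..x0+1} (g_of f)"
      proof (cases x x0 rule: linorder_cases)
        case less show ?thesis using key[OF x x0 less] by simp
      next
        case equal then show ?thesis by simp
      next
        case greater show ?thesis using key[OF x0 x greater] by simp
      qed
    qed
  qed
qed

end
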